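(* Let $\alpha=(\alpha_\pi)_{\pi\in\mathcal P}$ and $\beta=(\beta_\pi)_{\pi\in\mathcal P}$ be admissible families of weights. Then $\alpha=\beta$ if and only if $\alpha_\sigma=\beta_\sigma$ for every partition $\sigma\in\mathcal P$ with exactly two blocks.
   Context: Fix a finite set $\mathcal F$ of faces. For a word $\mathbf f\in\mathcal F^n$ ($n\ge1$), $[n]_{\mathbf f}$ is $\{1,\dots,n\}$ with faces $\ell\mapsto\mathbf f(\ell)$ (elements are called legs); $\mathcal P(\mathbf f)$ is the set of set partitions of $[n]$, viewed with these faces, and $\mathcal P=\bigcup_{\mathbf f}\mathcal P(\mathbf f)$. A finite totally ordered set $S$ with a face map is identified with $[m]_{|S|}$ through the order-preserving bijection ($|S|$ = word of faces read in order), so partitions of such sets (e.g. of a subset of $[n]$ with restricted faces, or of a quotient) are elements of $\mathcal P$. $1_{\mathbf f}$ is the one-block partition. For blocks $\beta_1\ne\beta_2$ of $\pi$, $\pi_{\beta_1\smile\beta_2}=(\pi\setminus\{\beta_1,\beta_2\})\cup\{\beta_1\cup\beta_2\}$, and $\{\beta_1,\beta_2\}$ is regarded as a partition of the multi-faced set $\beta_1\cup\beta_2$. Reduction: for $\pi\in\mathcal P(\mathbf f)$ let $s\sim t$ ($s\le t$) iff all $r\in[s,t]$ have the same face and lie in the same block; $\pi_{\mathrm{red}}$ is the induced partition of the quotient $[n]/\sim$ (classes are intervals, ordered naturally, with their common face). Mirror: $\overline{\mathbf f}(i)=\mathbf f(n+1-i)$, $\overline\pi=\{\{n+1-i:i\in\beta\}:\beta\in\pi\}\in\mathcal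 P(\overline{\mathbf f})$. A family $\alpha=(\alpha_\pi)_{\pi\in\mathcal P}$ of complex numbers is admissible if: (i) $\alpha_{1_{\mathbf f}}=1$ for all $\mathbf f$; (ii) $\alpha_{\{\{1\},\{2\}\}}=1$ for every $\mathbf f\in\mathcal F^2$; (iii) $\alpha_\pi=\alpha_{\pi_{\mathrm{red}}}$; (iv) if $\pi\in\mathcal P(\mathbf f)$ has blocks $\beta_1\ne\beta_2$ with $i\in\beta_1$, $i+1\in\beta_2$, $\mathbf f(i)=\mathbf f(i+1)$, then $\alpha_\pi=\alpha_{\pi_{\beta_1\smile\beta_2}}\alpha_{\{\beta_1,\beta_2\}}$; (v) $\alpha_\pi=\alpha_\sigma$ whenever $\pi\in\mathcal P(\mathbf f)$, $\sigma\in\mathcal P(\mathbf g)$ have the same underlying set partition of $[n]$ and $\mathbf f(\ell)=\mathbf g(\ell)$ for $1<\ell<n$; (vi) $\alpha_{\overline\pi}=\overline{\alpha_\pi}$. *)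

theory Defs
  imports Complex_Main "HOL-Library.Disjoint_Sets"
begin

text \<open>An element of the set P of multi-faced partitions is a pair (w, p): a word w of faces
  (w ! (i - 1) is the face of leg i) of length n \<ge> 1, and a set partition p of {1..n}.\<close>

type_synonym 'f mpart = "'f list \<times> nat set set"

definition Pf :: "'f mpart set" where
  "Pf = {(w, p). 1 \<le> length w \<and> partition_on {1..length w} p}"

text \<open>Standardisation: a finite subset S of the legs of w (totally ordered, with the restricted
  faces) and a partition q of S become an element of P via the order-preserving bijection
  S \<rightarrow> {1..|S|}, i \<mapsto> rank of i in S.\<close>

definition rank :: "nat set \<Rightarrow> nat \<Rightarrow> nat" where
  "rank S i = card {j \<in> S. j \<le> i}"

definition std :: "'f list \<Rightarrow> nat set \<Rightarrow> nat set set \<Rightarrow> 'f mpart" where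
  "std w S q = (map (\<lambda>i. w ! (i - 1)) (sorted_list_of_set S), (\<lambda>b. rank S ` b) ` q)"

definition one_block :: "'f list \<Rightarrow> 'f mpart" where
  "one_block w = (w, {{1..length w}})"

definition merge :: "nat set set \<Rightarrow> nat set \<Rightarrow> nat set \<Rightarrow> nat set set" where
  "merge p b1 b2 = (p - {b1, b2}) \<union> {b1 \<union> b2}"

definition red_sim :: "'f list \<Rightarrow> nat set set \<Rightarrow> nat \<Rightarrow> nat \<Rightarrow> bool" where
  "red_sim w p s t \<longleftrightarrow> s \<le> t \<and> (\<forall>r\<in>{s..t}. w ! (r - 1) = w ! (s - 1)) \<and> (\<exists>b\<in>p. {s..t} \<subseteq> b)"

definition red_class :: "'f list \<Rightarrow> nat set set \<Rightarrow> nat \<Rightarrow> nat set" where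
  "red_class w p i = {j \<in> {1..length w}. red_sim w p i j \<or> red_sim w p j i}"

text \<open>The quotient [n]/~ is identified (order-preservingly, faces preserved) with the set of
  minima of the classes; a class belongs to the block containing it.\<close>

definition reduce :: "'f mpart \<Rightarrow> 'f mpart" where
  "reduce \<pi> = (let w = fst \<pi>; p = snd \<pi>; Q = red_class w p ` {1..length w} in
      std w (Min ` Q) ((\<lambda>b. Min ` {c \<in> Q. c \<subseteq> b}) ` p))"

definition mirror :: "'f mpart \<Rightarrow> 'f mpart" where
  "mirror \<pi> = (rev (fst \<pi>), (\<lambda>b. (\<lambda>i. length (fst \<pi>) + 1 - i) ` b) ` snd \<pi>)"

definition admissible :: "('f mpart \<Rightarrow> complex) \<Rightarrow> bool" where
  "admissible \<alpha> \<longleftrightarrow>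
     (\<forall>w. 1 \<le> length w \<longrightarrow> \<alpha> (one_block w) = 1) \<and>
     (\<forall>w. length w = 2 \<longrightarrow> \<alpha> (w, {{1}, {2}}) = 1) \<and>
     (\<forall>\<pi>\<in>Pf. \<alpha> \<pi> = \<alpha> (reduce \<pi>)) \<and>
     (\<forall>(w, p)\<in>Pf. \<forall>b1\<in>p. \<forall>b2\<in>p. \<forall>i. b1 \<noteq> b2 \<and> i \<in> b1 \<and> i + 1 \<in> b2 \<and> w ! (i - 1) = w ! i \<longrightarrow>
        \<alpha> (w, p) = \<alpha> (w, merge p b1 b2) * \<alpha> (std w (b1 \<union> b2) {b1, b2})) \<and>
     (\<forall>(w, p)\<in>Pf. \<forall>(v, q)\<in>Pf. length v = length w \<and> q = p \<and>
        (\<forall>l. 1 < l \<and> l < length w \<longrightarrow> w ! (l - 1) = v ! (l - 1)) \<longrightarrow> \<alpha> (w, p) = \<alpha> (v, q)) \<and>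
     (\<forall>\<pi>\<in>Pf. \<alpha> (mirror \<pi>) = cnj (\<alpha> \<pi>))"

end

theory Submission
  imports Defs
begin

lemma rank_mono:
  assumes "finite S" "i \<in> S" "j \<in> S" "i < j"
  shows "rank S i < rank S j"
proof -
  have "j \<in> {k\<in>S. k \<le> j}" "j \<notin> {k\<in>S. k \<le> i}" using assms by auto
  moreover have "{k\<in>S. k \<le> i} \<subseteq> {k\<in>S. k \<le> j}" using assms by auto
  ultimately have "{k\<in>S. k \<le> i} \<subset> {k\<in>S. k \<le> j}" by blast
  then show ?thesis unfolding rank_def using assms(1) by (intro psubset_card_mono) auto
qed

lemma rank_inj: "finite S \<Longrightarrow> inj_on (rank S) S"
  by (metis (no_types, lifting) inj_onI less_irrefl linorder_cases rank_mono)

lemma rank_range: "finite S \<Longrightarrow> i \<in> S \<Longrightarrow> rank S i \<in> {1..card S}"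
proof -
  assume a: "finite S" "i \<in> S"
  have "{k\<in>S. k \<le> i} \<noteq> {}" using a by auto
  then have "rank S i \<ge> 1" unfolding rank_def using a
    by (metis (no_types, lifting) card_0_eq finite_subset less_one mem_Collect_eq not_le subsetI)
  moreover have "rank S i \<le> card S" unfolding rank_def using a by (intro card_mono) auto
  ultimately show ?thesis by auto
qed

lemma rank_image: "finite S \<Longrightarrow> rank S ` S = {1..card S}"
proof -
  assume f: "finite S"
  have sub: "rank S ` S \<subseteq> {1..card S}" using rank_range[OF f] by auto
  have "card (rank S ` S) = card {1..card S}" using card_image[OF rank_inj[OF f]] by simp
  then show ?thesis using sub by (intro card_subset_eq) auto
qed

lemma std_Pf:
  assumes "finite S" "S \<noteq> {}" "partition_on S q"
  shows "std w S q \<in> Pf" "card (snd (std w S q)) = card q"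
proof -
  have inj: "inj_on (rank S) S" using rank_inj assms by auto
  have "partition_on (rank S ` S) ((`) (rank S) ` q - {{}})"
    by (rule partition_on_inj_image[OF assms(3) inj])
  moreover have "(`) (rank S) ` q - {{}} = (`) (rank S) ` q"
    using partition_onD3[OF assms(3)] by auto
  ultimately have "partition_on {1..card S} ((`) (rank S) ` q)"
    using rank_image[OF assms(1)] by simp
  moreover have "card S \<ge> 1" using assms by (simp add: Suc_leI card_gt_0_iff)
  ultimately show "std w S q \<in> Pf" unfolding std_def Pf_def using assms by simp
  have "inj_on ((`) (rank S)) q"
  proof (rule inj_onI)
    fix x y assume "x \<in> q" "y \<in> q" "rank S ` x = rank S ` y"
    moreover have "x \<subseteq> S" "y \<subseteq> S" using \<open>x \<in> q\<close> \<open>y \<in> q\<close> partition_onD1[OF assms(3)] by auto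
    ultimately show "x = y" using inj_on_image_eq_iff[OF inj] by blast
  qed
  then show "card (snd (std w S q)) = card q" unfolding std_def by (simp add: card_image)
qed

lemma blk_uniq: "partition_on A P \<Longrightarrow> b \<in> P \<Longrightarrow> b' \<in> P \<Longrightarrow> x \<in> b \<Longrightarrow> x \<in> b' \<Longrightarrow> b = b'"
  unfolding partition_on_def disjoint_def by blast

lemma merge_part:
  assumes P: "partition_on A p" and "finite p" "b1 \<in> p" "b2 \<in> p" "b1 \<noteq> b2"
  shows "partition_on A (merge p b1 b2)" "card (merge p b1 b2) < card p"
proof -
  show "partition_on A (merge p b1 b2)"
  proof (rule partition_onI)
    show "\<Union>(merge p b1 b2) = A" using partition_onD1[OF P] assms(3,4) unfolding merge_def by auto
    show "{} \<notin> merge p b1 b2" using partition_onD3[OF P] assms(3) unfolding merge_def by auto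
    fix x y assume "x \<in> merge p b1 b2" "y \<in> merge p b1 b2" "x \<noteq> y"
    then show "disjnt x y" using blk_uniq[OF P] assms(3,4) unfolding merge_def disjnt_def by auto
  qed
  have "card (p - {b1, b2}) = card p - 2" using assms by (simp add: card_Diff_subset)
  moreover have "card (merge p b1 b2) \<le> card (p - {b1, b2}) + 1" unfolding merge_def
    using assms(2) by (simp add: card_insert_le_m1 card_insert_if)
  moreover have "card p \<ge> 2" using assms
    by (metis card_2_iff card_mono empty_subsetI insert_subset)
  ultimately show "card (merge p b1 b2) < card p" by linarith
qed

lemma reduce_prop:
  assumes Pf: "(w, p) \<in> Pf" and n2: "length w \<ge> 2" and w01: "w ! 0 = w ! 1"
    and b: "b \<in> p" "1 \<in> b" "2 \<in> b"
  shows "reduce (w, p) \<in> Pf" "length (fst (reduce (w, p))) < length w"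
    "card (snd (reduce (w, p))) \<le> card p"
proof -
  define n where "n = length w"
  have P: "partition_on {1..n} p" using Pf unfolding Pf_def n_def by auto
  have fp: "finite p" using P finite_elements by blast
  define Q where "Q = red_class w p ` {1..n}"
  define S where "S = Min ` Q"
  define q where "q = (\<lambda>b. Min ` {c \<in> Q. c \<subseteq> b}) ` p"
  have red: "reduce (w, p) = std w S q" unfolding reduce_def Let_def Q_def S_def q_def n_def by simp
  have cls_sub: "red_class w p i \<subseteq> {1..n}" for i unfolding red_class_def n_def by auto
  have cls_mem: "i \<in> red_class w p i" if ii: "i \<in> {1..n}" for i
  proof -
    obtain b where "b \<in> p" "i \<in> b" using partition_onD1[OF P] ii by auto
    then show ?thesis using ii unfolding red_class_def red_sim_def n_def by auto
  qed
  have cls_block: "red_class w p i \<subseteq> b" if "i \<in> {1..n}" "b \<in> p" "i \<in> b" for i b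
  proof
    fix j assume "j \<in> red_class w p i"
    then obtain b' where "b' \<in> p" "(i \<le> j \<and> {i..j} \<subseteq> b') \<or> (j \<le> i \<and> {j..i} \<subseteq> b')"
      unfolding red_class_def red_sim_def by auto
    then have "i \<in> b'" "j \<in> b'" by auto
    then show "j \<in> b" using blk_uniq[OF P \<open>b' \<in> p\<close> that(2)] that(3) by auto
  qed
  have fQ: "finite c" "c \<noteq> {}" if "c \<in> Q" for c
    using that cls_sub cls_mem finite_subset unfolding Q_def by blast+
  have minmem: "Min c \<in> c" if "c \<in> Q" for c using fQ[OF that] by simp
  have qpart: "partition_on S q"
  proof (rule partition_onI)
    show "\<Union>q = S"
    proof
      show "\<Union>q \<subseteq> S" unfolding q_def S_def by auto
      show "S \<subseteq> \<Union>q"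
      proof
        fix x assume "x \<in> S"
        then obtain i where i: "i \<in> {1..n}" "x = Min (red_class w p i)" unfolding S_def Q_def by auto
        obtain b where "b \<in> p" "i \<in> b" using partition_onD1[OF P] i by auto
        then have "red_class w p i \<in> {c \<in> Q. c \<subseteq> b}" using cls_block i unfolding Q_def by auto
        then show "x \<in> \<Union>q" using i \<open>b \<in> p\<close> unfolding q_def by auto
      qed
    qed
    show "{} \<notin> q"
    proof
      assume "{} \<in> q"
      then obtain b where "b \<in> p" "{c \<in> Q. c \<subseteq> b} = {}" unfolding q_def by auto
      moreover obtain i where "i \<in> b" using partition_onD3[OF P] \<open>b \<in> p\<close> by (metis all_not_in_conv)
      moreover have "i \<in> {1..n}" using partition_onD1[OF P] \<open>b \<in> p\<close> \<open>i \<in> b\<close> by auto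
      ultimately show False using cls_block unfolding Q_def by blast
    qed
    fix X Y assume "X \<in> q" "Y \<in> q" "X \<noteq> Y"
    then obtain b b' where bb: "b \<in> p" "b' \<in> p" "X = Min ` {c \<in> Q. c \<subseteq> b}" "Y = Min ` {c \<in> Q. c \<subseteq> b'}"
      unfolding q_def by auto
    show "disjnt X Y" unfolding disjnt_def
    proof (rule ccontr)
      assume "X \<inter> Y \<noteq> {}"
      then obtain c c' where cc: "c \<in> Q" "c \<subseteq> b" "c' \<in> Q" "c' \<subseteq> b'" "Min c = Min c'"
        using bb by auto
      then have "Min c \<in> b" "Min c \<in> b'" using minmem by (auto, metis subsetD)
      then have "b = b'" using blk_uniq[OF P bb(1,2)] by auto
      then show False using bb \<open>X \<noteq> Y\<close> by simp
    qed
  qed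
  have fS: "finite S" "S \<noteq> {}" unfolding S_def Q_def using n2 n_def by auto
  note st = std_Pf[OF fS qpart, of w]
  show "reduce (w, p) \<in> Pf" using red st by simp
  have "card q \<le> card p" unfolding q_def using fp card_image_le by blast
  then show "card (snd (reduce (w, p))) \<le> card p" using red st by simp
  have SS: "S = (\<lambda>i. Min (red_class w p i)) ` {1..n}" unfolding S_def Q_def by auto
  have "1 \<in> red_class w p 1" "2 \<in> red_class w p 2" using cls_mem n2 n_def by auto
  have m1: "Min (red_class w p 1) = 1"
    using cls_mem[of 1] n2 n_def cls_sub[of 1] fQ[of "red_class w p 1"] unfolding Q_def
    by (intro Min_eqI) auto
  have "1 \<in> red_class w p 2"
  proof -
    have "red_sim w p 1 2" unfolding red_sim_def using b w01
      by (auto simp: le_Suc_eq numeral_2_eq_2)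
    then show ?thesis unfolding red_class_def using n2 n_def by auto
  qed
  then have m2: "Min (red_class w p 2) = 1"
    using n2 n_def cls_sub[of 2] fQ[of "red_class w p 2"] unfolding Q_def
    by (intro Min_eqI) auto
  have "\<not> inj_on (\<lambda>i. Min (red_class w p i)) {1..n}"
  proof
    assume "inj_on (\<lambda>i. Min (red_class w p i)) {1..n}"
    moreover have "(1::nat) \<in> {1..n}" "(2::nat) \<in> {1..n}" using n2 n_def by auto
    ultimately have "(1::nat) = 2" using m1 m2 unfolding inj_on_def by metis
    then show False by simp
  qed
  then have "card S \<noteq> card {1..n}" unfolding SS using eq_card_imp_inj_on[of "{1..n}"] by auto
  moreover have "card S \<le> card {1..n}" unfolding SS by (rule card_image_le) simp
  ultimately have "card S < n" by simp
  then show "length (fst (reduce (w, p))) < length w" using red n_def unfolding std_def by simp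
qed

lemma adm_i: "admissible \<alpha> \<Longrightarrow> \<forall>w. 1 \<le> length w \<longrightarrow> \<alpha> (one_block w) = 1"
  unfolding admissible_def by (elim conjE) assumption

lemma adm_iii: "admissible \<alpha> \<Longrightarrow> \<forall>\<pi>\<in>Pf. \<alpha> \<pi> = \<alpha> (reduce \<pi>)"
  unfolding admissible_def by (elim conjE) assumption

lemma adm_iv: "admissible \<alpha> \<Longrightarrow> (\<forall>(w, p)\<in>Pf. \<forall>b1\<in>p. \<forall>b2\<in>p. \<forall>i. b1 \<noteq> b2 \<and> i \<in> b1 \<and> i + 1 \<in> b2 \<and> w ! (i - 1) = w ! i \<longrightarrow>
        \<alpha> (w, p) = \<alpha> (w, merge p b1 b2) * \<alpha> (std w (b1 \<union> b2) {b1, b2}))"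
  unfolding admissible_def by (elim conjE) assumption

lemma adm_v: "admissible \<alpha> \<Longrightarrow> (\<forall>(w, p)\<in>Pf. \<forall>(v, q)\<in>Pf. length v = length w \<and> q = p \<and>
        (\<forall>l. 1 < l \<and> l < length w \<longrightarrow> w ! (l - 1) = v ! (l - 1)) \<longrightarrow> \<alpha> (w, p) = \<alpha> (v, q))"
  unfolding admissible_def by (elim conjE) assumption

lemma adm_step:
  assumes A: "admissible \<alpha>" and Pf: "(w, p) \<in> Pf" and n2: "length w \<ge> 2"
  defines "w' \<equiv> w[0 := w ! 1]"
  shows "(w', p) \<in> Pf" "\<alpha> (w, p) = \<alpha> (w', p)"
    "\<alpha> (w', p) = \<alpha> (reduce (w', p))"
    "\<And>b1 b2. b1 \<in> p \<Longrightarrow> b2 \<in> p \<Longrightarrow> b1 \<noteq> b2 \<Longrightarrow> 1 \<in> b1 \<Longrightarrow> 2 \<in> b2 \<Longrightarrow>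
       \<alpha> (w', p) = \<alpha> (w', merge p b1 b2) * \<alpha> (std w' (b1 \<union> b2) {b1, b2})"
proof -
  have l: "length w' = length w" unfolding w'_def by simp
  show P': "(w', p) \<in> Pf" using Pf l unfolding Pf_def by simp
  have e: "w ! (l - 1) = w' ! (l - 1)" if "1 < l" for l unfolding w'_def using that by simp
  have v: "\<forall>(w, p)\<in>Pf. \<forall>(v, q)\<in>Pf. length v = length w \<and> q = p \<and>
        (\<forall>l. 1 < l \<and> l < length w \<longrightarrow> w ! (l - 1) = v ! (l - 1)) \<longrightarrow> \<alpha> (w, p) = \<alpha> (v, q)"
    using adm_v[OF A] .
  have "length w' = length w \<and> p = p \<and>
        (\<forall>l. 1 < l \<and> l < length w \<longrightarrow> w ! (l - 1) = w' ! (l - 1)) \<longrightarrow> \<alpha> (w, p) = \<alpha> (w', p)"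
  proof -
    have v1: "\<forall>(v, q)\<in>Pf. length v = length w \<and> q = p \<and>
        (\<forall>l. 1 < l \<and> l < length w \<longrightarrow> w ! (l - 1) = v ! (l - 1)) \<longrightarrow> \<alpha> (w, p) = \<alpha> (v, q)"
      using bspec[OF v Pf] by (simp only: prod.case)
    show ?thesis using bspec[OF v1 P'] by (simp only: prod.case)
  qed
  then show "\<alpha> (w, p) = \<alpha> (w', p)" using l e by blast
  show "\<alpha> (w', p) = \<alpha> (reduce (w', p))" using adm_iii[OF A] P' by blast
  have iv: "\<forall>(w, p)\<in>Pf. \<forall>b1\<in>p. \<forall>b2\<in>p. \<forall>i. b1 \<noteq> b2 \<and> i \<in> b1 \<and> i + 1 \<in> b2 \<and> w ! (i - 1) = w ! i \<longrightarrow>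
        \<alpha> (w, p) = \<alpha> (w, merge p b1 b2) * \<alpha> (std w (b1 \<union> b2) {b1, b2})"
    using adm_iv[OF A] .
  have "0 < length w" using n2 by linarith
  then have ww: "w' ! (1 - 1) = w' ! 1" unfolding w'_def by simp
  fix b1 b2 assume "b1 \<in> p" "b2 \<in> p" "b1 \<noteq> b2" "1 \<in> b1" "2 \<in> b2"
  then show "\<alpha> (w', p) = \<alpha> (w', merge p b1 b2) * \<alpha> (std w' (b1 \<union> b2) {b1, b2})"
  proof -
    have "b1 \<noteq> b2 \<and> 1 \<in> b1 \<and> 1 + 1 \<in> b2 \<and> w' ! (1 - 1) = w' ! 1 \<longrightarrow>
        \<alpha> (w', p) = \<alpha> (w', merge p b1 b2) * \<alpha> (std w' (b1 \<union> b2) {b1, b2})"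
      using bspec[OF iv P'] \<open>b1 \<in> p\<close> \<open>b2 \<in> p\<close> by (simp only: prod.case Ball_def) blast
    then show ?thesis using ww \<open>b1 \<noteq> b2\<close> \<open>1 \<in> b1\<close> \<open>2 \<in> b2\<close> by (simp add: numeral_2_eq_2)
  qed
qed

lemma main:
  assumes A: "admissible \<alpha>" and B: "admissible \<beta>"
    and H: "\<forall>\<sigma>\<in>Pf. card (snd \<sigma>) = 2 \<longrightarrow> \<alpha> \<sigma> = \<beta> \<sigma>"
  shows "(w, p) \<in> Pf \<Longrightarrow> \<alpha> (w, p) = \<beta> (w, p)"
proof (induction "length w + card p" arbitrary: w p rule: less_induct)
  case less
  define n where "n = length w"
  have P: "partition_on {1..n} p" and n1: "n \<ge> 1" using less.prems unfolding Pf_def n_def by auto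
  have fp: "finite p" using P finite_elements by blast
  consider "card p = 0" | "card p = 1" | "card p = 2" | "card p \<ge> 3" by linarith
  then show ?case
  proof cases
    case 1
    then have "p = {}" using fp by simp
    then show ?thesis using partition_onD1[OF P] n1 by auto
  next
    case 2
    then obtain b where "p = {b}" using card_1_singletonE by blast
    then have "p = {{1..n}}" using partition_onD1[OF P] by auto
    then have "(w, p) = one_block w" unfolding one_block_def n_def by simp
    moreover have "\<alpha> (one_block w) = 1" "\<beta> (one_block w) = 1"
      using adm_i[OF A] adm_i[OF B] n1 n_def by blast+
    ultimately show ?thesis by simp
  next
    case 3
    then show ?thesis using H less.prems by auto
  next
    case 4
    have n2: "n \<ge> 2"
    proof (rule ccontr)
      assume "\<not> n \<ge> 2"
      then have "n = 1" using n1 by simp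
      have "x = {1}" if "x \<in> p" for x
      proof -
        have "x \<subseteq> {1..n}" using partition_onD1[OF P] that by blast
        then have "x \<subseteq> {1}" using \<open>n = 1\<close> by simp
        moreover have "x \<noteq> {}" using partition_onD3[OF P] that by blast
        ultimately show ?thesis by blast
      qed
      then have "p \<subseteq> {{1}}" by auto
      then have "card p \<le> card {{1::nat}}" by (intro card_mono) auto
      then have "card p \<le> 1" by simp
      then show False using 4 by simp
    qed
    define w' where "w' = w[0 := w ! 1]"
    note sa = adm_step[OF A less.prems n2[unfolded n_def], folded w'_def]
    note sb = adm_step[OF B less.prems n2[unfolded n_def], folded w'_def]
    have lw: "length w' = n" unfolding w'_def n_def by simp
    have U: "\<Union>p = {1..n}" using partition_onD1[OF P] by simp
    have "(1::nat) \<in> \<Union>p" "(2::nat) \<in> \<Union>p" unfolding U using n1 n2 by simp_all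
    then obtain b1 b2 where b1: "b1 \<in> p" "1 \<in> b1" and b2: "b2 \<in> p" "2 \<in> b2" by blast
    show ?thesis
    proof (cases "b1 = b2")
      case True
      have "0 < length w" using n2 n_def by linarith
      then have w01: "w' ! 0 = w' ! 1" unfolding w'_def by simp
      note r = reduce_prop[OF sa(1) n2[folded lw] w01 b1 b2(2)[folded True]]
      obtain w2 p2 where e: "reduce (w', p) = (w2, p2)" by (cases "reduce (w', p)") simp
      have r1: "(w2, p2) \<in> Pf" using r(1) unfolding e .
      have r2: "length w2 < n" using r(2) lw unfolding e by simp
      have r3: "card p2 \<le> card p" using r(3) unfolding e by simp
      have "length w2 + card p2 < length w + card p" using r2 r3 n_def by linarith
      then have "\<alpha> (w2, p2) = \<beta> (w2, p2)" using r1 by (rule less.hyps)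
      then show ?thesis using sa(2,3) sb(2,3) e by simp
    next
      case False
      have m: "partition_on {1..n} (merge p b1 b2)" "card (merge p b1 b2) < card p"
        using merge_part[OF P fp b1(1) b2(1) False] by auto
      have mP: "(w', merge p b1 b2) \<in> Pf" using m(1) lw n1 unfolding Pf_def by simp
      have "length w' + card (merge p b1 b2) < length w + card p" using m(2) lw n_def by linarith
      then have eq1: "\<alpha> (w', merge p b1 b2) = \<beta> (w', merge p b1 b2)" using mP by (rule less.hyps)
      have pp: "partition_on (b1 \<union> b2) {b1, b2}"
        using partition_onD3[OF P] b1 b2 False blk_uniq[OF P b1(1) b2(1)]
        by (intro partition_onI) (auto simp: disjnt_def)
      have sub: "b1 \<union> b2 \<subseteq> {1..n}" using U b1(1) b2(1) by blast
      have fin: "finite (b1 \<union> b2)" using sub by (rule finite_subset) simp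
      have ne: "b1 \<union> b2 \<noteq> {}" using b1 by blast
      note st = std_Pf[OF fin ne pp, of w']
      have c2: "card {b1, b2} = 2" using False by simp
      have "card (snd (std w' (b1 \<union> b2) {b1, b2})) = 2" using st(2) c2 by simp
      then have eq2: "\<alpha> (std w' (b1 \<union> b2) {b1, b2}) = \<beta> (std w' (b1 \<union> b2) {b1, b2})"
        using H st(1) by blast
      show ?thesis using sa(2) sb(2) sa(4)[OF b1(1) b2(1) False b1(2) b2(2)] sb(4)[OF b1(1) b2(1) False b1(2) b2(2)]
          eq1 eq2 by simp
    qed
  qed
qed

theorem lemma6p3:
  fixes \<alpha> \<beta> :: "('f::finite) mpart \<Rightarrow> complex"
  assumes "admissible \<alpha>" and "admissible \<beta>"
  shows "(\<forall>\<pi>\<in>Pf. \<alpha> \<pi> = \<beta> \<pi>) \<longleftrightarrow> (\<forall>\<sigma>\<in>Pf. card (snd \<sigma>) = 2 \<longrightarrow> \<alpha> \<sigma> = \<beta> \<sigma>)"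
  using main[OF assms] by auto

end
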